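(* Let $k\ge2$ be an integer and $\mathcal{M}=\{k\}\subseteq\mathbb{N}_0$. Then: (1) $\mathcal{M}^1=\{x\in\mathbb{N}_0:\ x\bmod 2k\in\{k,k+1,\dots,2k-1\}\}$; (2) $\mathcal{M}^2=\{k,\dots,2k-1\}\cup\{2jk-1:\ j\ge2\}$; (3) $\mathcal{M}^3=\{k,\dots,2k-1\}\cup\{4k-1,\dots,5k-2\}\cup\{(2j+1)k-2:\ j\ge3\}$; (4) $\mathcal{M}^4=\mathcal{M}_k\cap\{0,1,\dots,10k-3\}$; (5) $\mathcal{M}^5=\mathcal{M}_k$, where $\mathcal{M}_k=\{ip_k+j:\ i\in\mathbb{N}_0,\ k\le j\le 2k-1\}$ with $p_k=3k-1$.
   Context: A one-heap game is a set $\mathcal{M}\subseteq\mathbb{N}_0$ of moves; from position $x\in\mathbb{N}_0$ one may move to $y\in\mathbb{N}_0$ iff $x-y\in\mathcal{M}$. Misère play: a player who cannot move wins. If $0\in\mathcal{M}$, $P(\mathcal{M})=\varnothing$. Otherwise: a position is an N-position if it has no option or some option is a P-position; otherwise it is a P-position; $P(\mathcal{M})$ denotes the set of P-positions. $\mathcal{M}^\star=P(\mathcal{M})$, $\mathcal{M}^0=\mathcal{M}$, $\mathcal{M}^i=(\mathcal{M}^{i-1})^\star$. *)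

theory Defs
  imports Main
begin

text \<open>Misere one-heap game with move set M.
  Options of x are the y with y \<le> x and x - y \<in> M; since 0 \<notin> M these satisfy y < x.\<close>

function isP :: "nat set \<Rightarrow> nat \<Rightarrow> bool" where
  "isP M x = (0 \<notin> M \<and> (\<exists>y<x. x - y \<in> M) \<and> (\<forall>y<x. x - y \<in> M \<longrightarrow> \<not> isP M y))"
  by auto
termination
  by (relation "measure snd") auto

definition Pset :: "nat set \<Rightarrow> nat set" where
  "Pset M = (if 0 \<in> M then {} else {x. isP M x})"

definition iterP :: "nat set \<Rightarrow> nat \<Rightarrow> nat set" where
  "iterP M i = (Pset ^^ i) M"

definition Mk :: "nat \<Rightarrow> nat set" where
  "Mk k = {i * (3 * k - 1) + j | i j. k \<le> j \<and> j \<le> 2 * k - 1}"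

end

theory Submission
  imports Defs
begin


declare isP.simps[simp del]

lemma isP_iff: "0 \<notin> M \<Longrightarrow> isP M x = ((\<exists>m\<in>M. m \<le> x) \<and> (\<forall>m\<in>M. m \<le> x \<longrightarrow> \<not> isP M (x-m)))"
proof -
  assume h0: "0 \<notin> M"
  have a: "(\<exists>y<x. x - y \<in> M) = (\<exists>m\<in>M. m \<le> x)"
  proof
    assume "\<exists>y<x. x - y \<in> M" then obtain y where "y<x" "x-y\<in>M" by auto
    then show "\<exists>m\<in>M. m \<le> x" by (intro bexI[of _ "x-y"]) auto
  next
    assume "\<exists>m\<in>M. m \<le> x" then obtain m where m: "m\<in>M" "m\<le>x" by auto
    have m0: "0 < m" using h0 m by (cases m) auto
    show "\<exists>y<x. x - y \<in> M" using m m0 by (intro exI[of _ "x-m"]) auto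
  qed
  have b: "(\<forall>y<x. x - y \<in> M \<longrightarrow> \<not> isP M y) = (\<forall>m\<in>M. m \<le> x \<longrightarrow> \<not> isP M (x-m))"
  proof
    assume h: "\<forall>y<x. x - y \<in> M \<longrightarrow> \<not> isP M y"
    show "\<forall>m\<in>M. m \<le> x \<longrightarrow> \<not> isP M (x-m)"
    proof (intro ballI impI)
      fix m assume m: "m\<in>M" "m\<le>x"
      have "m \<noteq> 0" using h0 m(1) by (metis)
      then have "x - m < x" "x - (x - m) = m" using m by auto
      then show "\<not> isP M (x-m)" using m h by (metis (no_types))
    qed
  next
    assume h: "\<forall>m\<in>M. m \<le> x \<longrightarrow> \<not> isP M (x-m)"
    show "\<forall>y<x. x - y \<in> M \<longrightarrow> \<not> isP M y"
    proof (intro allI impI)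
      fix y assume "y<x" "x-y\<in>M"
      then have "x - y \<le> x" "x - (x - y) = y" by auto
      with h \<open>x-y\<in>M\<close> show "\<not> isP M y" by metis
    qed
  qed
  show ?thesis using h0 a b isP.simps[of M x] by simp
qed

lemma Pset_eqI:
  assumes h0: "0 \<notin> M"
    and h: "\<And>x. x \<in> S \<longleftrightarrow> ((\<exists>m\<in>M. m \<le> x) \<and> (\<forall>m\<in>M. m \<le> x \<longrightarrow> x-m \<notin> S))"
  shows "Pset M = S"
proof -
  have "isP M x \<longleftrightarrow> x \<in> S" for x
  proof (induction x rule: less_induct)
    case (less x)
    have "\<forall>m\<in>M. m \<le> x \<longrightarrow> (isP M (x-m) \<longleftrightarrow> x-m \<in> S)"
    proof (intro ballI impI)
      fix m assume m: "m\<in>M" "m\<le>x"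
      have "m \<noteq> 0" using h0 m(1) by metis
      then have "x - m < x" using m by arith
      then show "isP M (x-m) \<longleftrightarrow> x-m \<in> S" using less by blast
    qed
    then show ?case using isP_iff[OF h0, of x] h[of x] by blast
  qed
  then show ?thesis using h0 unfolding Pset_def by auto
qed

lemma diff_mod_int:
  fixes x m D :: nat
  assumes "0 < D" "m \<le> x"
  shows "int ((x - m) mod D) = (int (x mod D) - int (m mod D)) mod int D"
proof -
  have "int ((x - m) mod D) = (int x - int m) mod int D" using assms by (simp add: of_nat_mod of_nat_diff)
  also have "\<dots> = (int (x mod D) - int (m mod D)) mod int D" by (simp add: mod_diff_eq zmod_int)
  finally show ?thesis .
qed

lemma diff_mod1:
  fixes x m D :: nat
  assumes "0 < D" "m \<le> x" "m mod D \<le> x mod D"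
  shows "(x - m) mod D = x mod D - m mod D"
proof -
  have r: "x mod D < D" "m mod D < D" using assms by auto
  have "(int (x mod D) - int (m mod D)) mod int D = int (x mod D) - int (m mod D)"
      using r assms(3) by (intro mod_pos_pos_trivial) linarith+
  then have "int ((x - m) mod D) = int (x mod D) - int (m mod D)" using diff_mod_int[OF assms(1,2)] by simp
  then show ?thesis using assms(3) by linarith
qed

lemma diff_mod2:
  fixes x m D :: nat
  assumes "0 < D" "m \<le> x" "x mod D < m mod D"
  shows "(x - m) mod D = D + x mod D - m mod D"
proof -
  have r: "x mod D < D" "m mod D < D" using assms by auto
  have "(int (x mod D) - int (m mod D)) mod int D = (int D + int (x mod D) - int (m mod D)) mod int D"
      by (metis add.commute add_diff_eq mod_add_self2)
  also have "\<dots> = int D + int (x mod D) - int (m mod D)"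
      using r assms(3) by (intro mod_pos_pos_trivial) linarith+
  finally have "int ((x - m) mod D) = int D + int (x mod D) - int (m mod D)" using diff_mod_int[OF assms(1,2)] by simp
  then show ?thesis using assms(3) by linarith
qed

lemma mod_ge: "(0::nat) < D \<Longrightarrow> x mod D \<noteq> x \<Longrightarrow> D + x mod D \<le> x"
proof -
  assume a: "0 < D" "x mod D \<noteq> x"
  have e: "x = D * (x div D) + x mod D" by simp
  have "x div D \<noteq> 0"
  proof
    assume "x div D = 0"
    with e have "x = x mod D" by simp
    with a show False by simp
  qed
  then have "D \<le> D * (x div D)" by simp
  then show ?thesis using e by linarith
qed


lemma P1:
  assumes k2: "2 \<le> (k::nat)"
  shows "Pset {k} = {x. k \<le> x mod (2*k)}"
proof (rule Pset_eqI)
  show "0 \<notin> {k}" using k2 by simp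
  fix x :: nat
  have D: "0 < 2*k" using k2 by simp
  have km: "k mod (2*k) = k" using k2 by simp
  have rl: "x mod (2*k) < 2*k" using D by simp
  have xl: "x mod (2*k) \<le> x" by simp
  show "x \<in> {x. k \<le> x mod (2*k)} \<longleftrightarrow> ((\<exists>m\<in>{k}. m \<le> x) \<and> (\<forall>m\<in>{k}. m \<le> x \<longrightarrow> x-m \<notin> {x. k \<le> x mod (2*k)}))"
  proof (cases "k \<le> x mod (2*k)")
    case True
    then have "k \<le> x" using xl by linarith
    moreover have "(x - k) mod (2*k) = x mod (2*k) - k" using diff_mod1[OF D \<open>k \<le> x\<close>] km True by simp
    ultimately show ?thesis using True rl by auto
  next
    case False
    have "(x - k) mod (2*k) = 2*k + x mod (2*k) - k" if "k \<le> x" using diff_mod2[OF D that] km False by simp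
    then show ?thesis using False by auto
  qed
qed

lemma P2:
  assumes k2: "2 \<le> (k::nat)"
  shows "Pset {x. k \<le> x mod (2*k)} = {x. (k \<le> x \<and> x \<le> 2*k-1) \<or> (4*k-1 \<le> x \<and> x mod (2*k) = 2*k-1)}"
    (is "Pset ?M = ?S")
proof (rule Pset_eqI)
  show "0 \<notin> ?M" using k2 by simp
  fix x :: nat
  have D: "0 < 2*k" using k2 by simp
  have km: "k mod (2*k) = k" using k2 by simp
  have rl: "\<And>y. y mod (2*k) < 2*k" using D by simp
  have yl: "\<And>y. y mod (2*k) \<le> y" by simp
  show "x \<in> ?S \<longleftrightarrow> ((\<exists>m\<in>?M. m \<le> x) \<and> (\<forall>m\<in>?M. m \<le> x \<longrightarrow> x-m \<notin> ?S))"
  proof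
    assume xS: "x \<in> ?S"
    have ex: "\<exists>m\<in>?M. m \<le> x" using xS km by (intro bexI[of _ k]) auto
    have "x - m \<notin> ?S" if m: "m \<in> ?M" "m \<le> x" for m
    proof
      assume t: "x - m \<in> ?S"
      have mk2: "k \<le> m mod (2*k)" using m by simp
      have mk: "k \<le> m" "k \<le> m mod (2*k)" using mk2 yl[of m] by linarith+
      show False
      proof (cases "x \<le> 2*k-1")
        case True then show ?thesis using t mk m(2) k2 by (auto; linarith)
      next
        case False
        then have xr: "x mod (2*k) = 2*k-1" using xS by auto
        have "(x - m) mod (2*k) = x mod (2*k) - m mod (2*k)"
          using diff_mod1[OF D m(2)] xr rl[of m] by simp
        then have tm: "(x - m) mod (2*k) < k" using xr mk k2 by linarith
        show False
        proof (cases "x - m \<le> 2*k-1")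
          case True
          then have e: "(x-m) mod (2*k) = x - m" using D by simp
          have "k \<le> x - m" using t True k2 by auto
          then show ?thesis using tm e by linarith
        next
          case False then show ?thesis using tm t by auto
        qed
      qed
    qed
    then show "(\<exists>m\<in>?M. m \<le> x) \<and> (\<forall>m\<in>?M. m \<le> x \<longrightarrow> x-m \<notin> ?S)" using ex by blast
  next
    assume R: "(\<exists>m\<in>?M. m \<le> x) \<and> (\<forall>m\<in>?M. m \<le> x \<longrightarrow> x-m \<notin> ?S)"
    show "x \<in> ?S"
    proof (rule ccontr)
      assume xS: "x \<notin> ?S"
      from R obtain m0 where m0: "m0 \<in> ?M" "m0 \<le> x" by blast
      have "k \<le> m0 mod (2*k)" using m0 by simp
      then have xk: "k \<le> x" using yl[of m0] m0 by linarith
      define r where "r = x mod (2*k)"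
      have rD: "r < 2*k" using rl r_def by simp
      have "\<exists>m\<in>?M. m \<le> x \<and> x - m \<in> ?S"
      proof (cases "r < k")
        case True
        then have "r \<noteq> x" using xk by simp
        then have xg: "2*k + r \<le> x" using mod_ge[OF D, of x] r_def by simp
        define t where "t = k + r"
        have tm: "t mod (2*k) = t" using True t_def by simp
        have "(x - t) mod (2*k) = 2*k + r - t" using diff_mod2[of "2*k" t x] D xg tm t_def r_def by simp
        then have "x - t \<in> ?M" using t_def by simp
        moreover have "x - (x - t) \<in> ?S" using xg t_def True by (simp; arith)
        ultimately show ?thesis by (intro bexI[of _ "x-t"]) auto
      next
        case False
        have x2: "2*k \<le> x" using xS xk by auto
        show ?thesis
        proof (cases "r = 2*k-1")
          case True
          have "r \<noteq> x" using x2 rD by simp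
          then have "2*k + r \<le> x" using mod_ge[OF D, of x] r_def by simp
          then show ?thesis using True xS r_def by auto
        next
          case False2: False
          have "r \<noteq> x" using x2 rD by simp
          then have xg: "2*k + r \<le> x" using mod_ge[OF D, of x] r_def by simp
          define t where "t = 2*k-1"
          have tm: "t mod (2*k) = t" using t_def D by simp
          have "(x - t) mod (2*k) = 2*k + r - t" using diff_mod2[of "2*k" t x] D xg tm t_def r_def False2 rD by simp
          then have "x - t \<in> ?M" using t_def False by simp
          moreover have "x - (x - t) \<in> ?S" using xg t_def k2 by (simp; arith)
          ultimately show ?thesis by (intro bexI[of _ "x-t"]) auto
        qed
      qed
      then show False using R by blast
    qed
  qed
qed


lemma qsplit: "(0::nat) < D \<Longrightarrow> t \<le> c*D + t mod D \<or> c*D + D + t mod D \<le> t"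
proof -
  assume D: "0 < D"
  have e: "t = D * (t div D) + t mod D" by simp
  show ?thesis
  proof (cases "t div D \<le> c")
    case True
    then have "D * (t div D) \<le> c * D" by (simp add: mult.commute)
    then show ?thesis using e by linarith
  next
    case False
    then have "Suc c \<le> t div D" by simp
    then have "D * Suc c \<le> D * (t div D)" by (rule mult_le_mono2)
    moreover have "D * Suc c = c*D + D" by simp
    ultimately show ?thesis using e by linarith
  qed
qed

definition A2 :: "nat \<Rightarrow> nat set" where "A2 k = {x. (k \<le> x \<and> x \<le> 2*k-1) \<or> (4*k-1 \<le> x \<and> x mod (2*k) = 2*k-1)}"
definition A3 :: "nat \<Rightarrow> nat set" where "A3 k = {x. (k \<le> x \<and> x \<le> 2*k-1) \<or> (4*k-1 \<le> x \<and> x \<le> 5*k-2) \<or> (7*k-2 \<le> x \<and> x mod (2*k) = k-2)}"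

lemma A2I1: "k \<le> x \<Longrightarrow> x \<le> 2*k-1 \<Longrightarrow> x \<in> A2 k" unfolding A2_def by simp
lemma A3I1: "k \<le> x \<Longrightarrow> x \<le> 2*k-1 \<Longrightarrow> x \<in> A3 k" unfolding A3_def by simp
lemma A3I2: "4*k-1 \<le> x \<Longrightarrow> x \<le> 5*k-2 \<Longrightarrow> x \<in> A3 k" unfolding A3_def by simp

lemma A2lin: "x \<in> A2 k \<Longrightarrow> k \<le> x \<and> (x \<le> 2*k-1 \<or> 4*k-1 \<le> x)" unfolding A2_def by auto
lemma A3lin: "x \<in> A3 k \<Longrightarrow> k \<le> x \<and> (x \<le> 2*k-1 \<or> (4*k-1 \<le> x \<and> x \<le> 5*k-2) \<or> 7*k-2 \<le> x)" unfolding A3_def by auto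
lemma A3E: "x \<in> A3 k \<Longrightarrow> (k \<le> x \<Longrightarrow> x \<le> 2*k-1 \<Longrightarrow> P) \<Longrightarrow> (4*k-1 \<le> x \<Longrightarrow> x \<le> 5*k-2 \<Longrightarrow> P)
  \<Longrightarrow> (7*k-2 \<le> x \<Longrightarrow> x mod (2*k) = k-2 \<Longrightarrow> P) \<Longrightarrow> P" unfolding A3_def by auto

lemma P3:
  assumes k2: "2 \<le> (k::nat)"
  shows "Pset (A2 k) = A3 k"
proof (rule Pset_eqI)
  show "0 \<notin> A2 k" using k2 by (simp add: A2_def)
  fix x :: nat
  have D: "0 < 2*k" using k2 by simp
  have rl: "\<And>y. y mod (2*k) < 2*k" using D by simp
  have yl: "\<And>y. y mod (2*k) \<le> y" by simp
  have A2k: "\<And>m. m \<in> A2 k \<Longrightarrow> k \<le> m"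
    unfolding A2_def by auto
  show "x \<in> A3 k \<longleftrightarrow> ((\<exists>m\<in>A2 k. m \<le> x) \<and> (\<forall>m\<in>A2 k. m \<le> x \<longrightarrow> x-m \<notin> A3 k))"
  proof
    assume xS: "x \<in> A3 k"
    have "k \<le> 2*k-1" using k2 by simp
    then have kA: "k \<in> A2 k" unfolding A2_def by simp
    have "k \<le> x" using xS unfolding A3_def by auto
    then have ex: "\<exists>m\<in>A2 k. m \<le> x" using kA by blast
    have "x - m \<notin> A3 k" if m: "m \<in> A2 k" "m \<le> x" for m
    proof
      assume t: "x - m \<in> A3 k"
      have mk: "k \<le> m" using A2k m by simp
      show False
      proof (cases "x \<le> 5*k-2")
        case True then show ?thesis using A3lin[OF t] A2lin[OF m(1)] A3lin[OF xS] m(2) k2 by arith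
      next
        case False
        then have xr: "x mod (2*k) = k-2" "7*k-2 \<le> x" using xS unfolding A3_def by auto
        show False
        proof (cases "m \<le> 2*k-1")
          case True
          then have mm: "m mod (2*k) = m" using k2 by simp
          have "(x - m) mod (2*k) = 2*k + x mod (2*k) - m mod (2*k)"
            using diff_mod2[OF D m(2)] xr mm mk k2 by simp
          then have "(x - m) mod (2*k) \<noteq> k-2" using xr mm True k2 by simp
          moreover have "5*k-1 \<le> x - m" using xr True k2 by linarith
          ultimately show ?thesis using t unfolding A3_def by auto
        next
          case False
          then have mm: "m mod (2*k) = 2*k-1" using m unfolding A2_def by auto
          have "(x - m) mod (2*k) = 2*k + x mod (2*k) - m mod (2*k)"
            using diff_mod2[OF D m(2)] xr mm k2 by simp
          then have tm: "(x - m) mod (2*k) = k-1" using xr mm k2 by simp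
          have "x - m \<le> 1*(2*k) + (x-m) mod (2*k) \<or> 1*(2*k) + 2*k + (x-m) mod (2*k) \<le> x - m"
            using qsplit[OF D] by blast
          then have a: "x - m \<le> 3*k-1 \<or> 5*k-1 \<le> x - m" using tm k2 by linarith
          show ?thesis
          proof (cases "x - m < 2*k")
            case True
            then have "(x-m) mod (2*k) = x - m" by simp
            show ?thesis using t by (rule A3E) (use tm True k2 \<open>(x-m) mod (2*k) = x - m\<close> in linarith)+
          next
            case False
            show ?thesis using t by (rule A3E) (use a tm False k2 in linarith)+
          qed
        qed
      qed
    qed
    then show "(\<exists>m\<in>A2 k. m \<le> x) \<and> (\<forall>m\<in>A2 k. m \<le> x \<longrightarrow> x-m \<notin> A3 k)" using ex by blast
  next
    assume R: "(\<exists>m\<in>A2 k. m \<le> x) \<and> (\<forall>m\<in>A2 k. m \<le> x \<longrightarrow> x-m \<notin> A3 k)"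
    show "x \<in> A3 k"
    proof (rule ccontr)
      assume xS: "x \<notin> A3 k"
      from R obtain m0 where m0: "m0 \<in> A2 k" "m0 \<le> x" by blast
      then have xk: "k \<le> x" using A2k[of m0] by linarith
      define r where "r = x mod (2*k)"
      have rD: "r < 2*k" using rl r_def by simp
      have "\<exists>m\<in>A2 k. m \<le> x \<and> x - m \<in> A3 k"
      proof (cases "x \<le> 7*k-3")
        case True
        have n1: "\<not> (k \<le> x \<and> x \<le> 2*k-1)" "\<not> (4*k-1 \<le> x \<and> x \<le> 5*k-2)" using xS unfolding A3_def by auto
        consider "x \<le> 3*k-1" | "3*k-1 < x \<and> x \<le> 4*k-2" | "5*k-1 \<le> x \<and> x \<le> 6*k-2" | "6*k-2 < x"
          using n1 xk True by linarith
        then show ?thesis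
        proof cases
          case 1
          have "x - k \<in> A2 k \<and> x - k \<le> x \<and> x - (x - k) \<in> A3 k"
            using 1 n1 xk k2 by (intro conjI A2I1 A3I1) linarith+
          then show ?thesis by blast
        next
          case 2
          have "2*k-1 \<in> A2 k \<and> 2*k-1 \<le> x \<and> x - (2*k-1) \<in> A3 k"
            using 2 n1 xk k2 by (intro conjI A2I1 A3I1) linarith+
          then show ?thesis by blast
        next
          case 3
          have "x - (4*k-1) \<in> A2 k \<and> x - (4*k-1) \<le> x \<and> x - (x - (4*k-1)) \<in> A3 k"
            using 3 n1 xk k2 by (intro conjI A2I1 A3I2) linarith+
          then show ?thesis by blast
        next
          case 4
          have "2*k-1 \<in> A2 k \<and> 2*k-1 \<le> x \<and> x - (2*k-1) \<in> A3 k"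
            using 4 True n1 xk k2 by (intro conjI A2I1 A3I2) linarith+
          then show ?thesis by blast
        qed
      next
        case False
        have rne: "r \<noteq> k-2" using xS False r_def unfolding A3_def by auto
        consider "r+3 \<le> k" | "2*k-2 \<le> r" | "k-1 \<le> r \<and> r \<le> 2*k-3" using rne rD k2 by arith
        then show ?thesis
        proof cases
          case 1
          define m where "m = k+2+r"
          have mm: "m mod (2*k) = m" using 1 m_def by simp
          have mx: "m \<le> x" using m_def 1 False by linarith
          have tm: "(x - m) mod (2*k) = k-2"
            using diff_mod2[OF D mx] mm m_def r_def k2 by simp
          have "x - m \<le> 2*(2*k) + (x-m) mod (2*k) \<or> 2*(2*k) + 2*k + (x-m) mod (2*k) \<le> x - m"
            using qsplit[OF D] by blast
          then have "7*k-2 \<le> x - m" using tm m_def 1 False k2 by linarith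
          then have "x - m \<in> A3 k" using tm unfolding A3_def by simp
          moreover have "m \<in> A2 k" using m_def 1 by (intro A2I1) linarith+
          ultimately show ?thesis using mx by blast
        next
          case 2
          define m where "m = r+2-k"
          have "m < 2*k" using 2 m_def rD k2 by linarith
          then have mm: "m mod (2*k) = m" by simp
          have mx: "m \<le> x" using m_def 2 False rD by linarith
          have tm: "(x - m) mod (2*k) = k-2"
            using diff_mod1[OF D mx] mm m_def r_def k2 2 by simp
          have "x - m \<le> 2*(2*k) + (x-m) mod (2*k) \<or> 2*(2*k) + 2*k + (x-m) mod (2*k) \<le> x - m"
            using qsplit[OF D] by blast
          then have "7*k-2 \<le> x - m" using tm m_def 2 False k2 rD by linarith
          then have "x - m \<in> A3 k" using tm unfolding A3_def by simp
          moreover have "m \<in> A2 k" using m_def 2 rD k2 by (intro A2I1) linarith+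
          ultimately show ?thesis using mx by blast
        next
          case 3
          define t where "t = r+1"
          have "t < 2*k" using 3 t_def k2 by linarith
          then have tt: "t mod (2*k) = t" by simp
          have tx: "t \<le> x" using t_def 3 False by linarith
          have "(x - t) mod (2*k) = 2*k + x mod (2*k) - t mod (2*k)"
            using diff_mod2[OF D tx] tt t_def r_def by simp
          then have "(x - t) mod (2*k) = 2*k-1" using tt t_def r_def by simp
          moreover have "4*k-1 \<le> x - t" using t_def 3 False by linarith
          ultimately have "x - t \<in> A2 k" unfolding A2_def by simp
          moreover have "x - (x - t) \<in> A3 k" using tx t_def 3 k2 rD by (intro A3I1) linarith+
          ultimately show ?thesis by (intro bexI[of _ "x-t"]) auto
        qed
      qed
      then show False using R by blast
    qed
  qed
qed

definition A4 :: "nat \<Rightarrow> nat set" where "A4 k = {x. (k \<le> x \<and> x \<le> 2*k-1) \<or> (4*k-1 \<le> x \<and> x \<le> 5*k-2) \<or> (7*k-2 \<le> x \<and> x \<le> 8*k-3) \<or> x = 10*k-3}"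

lemma A4E: "x \<in> A4 k \<Longrightarrow> (k \<le> x \<Longrightarrow> x \<le> 2*k-1 \<Longrightarrow> P) \<Longrightarrow> (4*k-1 \<le> x \<Longrightarrow> x \<le> 5*k-2 \<Longrightarrow> P)
  \<Longrightarrow> (7*k-2 \<le> x \<Longrightarrow> x \<le> 8*k-3 \<Longrightarrow> P) \<Longrightarrow> (x = 10*k-3 \<Longrightarrow> P) \<Longrightarrow> P" unfolding A4_def by auto
lemma A4I1: "k \<le> x \<Longrightarrow> x \<le> 2*k-1 \<Longrightarrow> x \<in> A4 k" unfolding A4_def by simp
lemma A4I2: "4*k-1 \<le> x \<Longrightarrow> x \<le> 5*k-2 \<Longrightarrow> x \<in> A4 k" unfolding A4_def by simp
lemma A4I3: "7*k-2 \<le> x \<Longrightarrow> x \<le> 8*k-3 \<Longrightarrow> x \<in> A4 k" unfolding A4_def by simp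
lemma A4I4: "x = 10*k-3 \<Longrightarrow> x \<in> A4 k" unfolding A4_def by simp
lemma A3I3: "7*k-2 \<le> x \<Longrightarrow> x mod (2*k) = k-2 \<Longrightarrow> x \<in> A3 k" unfolding A3_def by simp
lemma modI: "x = D*q + s \<Longrightarrow> s < (D::nat) \<Longrightarrow> x mod D = s" by simp
lemma mle: "q \<le> c \<Longrightarrow> (k::nat)*q \<le> c*k" by (simp add: mult.commute)
lemma mge: "c \<le> q \<Longrightarrow> c*(k::nat) \<le> k*q" by (simp add: mult.commute)

lemma P4:
  assumes k2: "2 \<le> (k::nat)"
  shows "Pset (A3 k) = A4 k"
proof (rule Pset_eqI)
  show "0 \<notin> A3 k" using k2 by (simp add: A3_def)
  fix x :: nat
  have D: "0 < 2*k" using k2 by simp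
  have rl: "\<And>y. y mod (2*k) < 2*k" using D by simp
  have A4lin: "\<And>y. y \<in> A4 k \<Longrightarrow> k \<le> y \<and> y \<le> 10*k-3" using k2 by (elim A4E) linarith+
  show "x \<in> A4 k \<longleftrightarrow> ((\<exists>m\<in>A3 k. m \<le> x) \<and> (\<forall>m\<in>A3 k. m \<le> x \<longrightarrow> x-m \<notin> A4 k))"
  proof
    assume xS: "x \<in> A4 k"
    have "k \<le> 2*k-1" using k2 by simp
    then have kA: "k \<in> A3 k" by (intro A3I1) auto
    have "k \<le> x" using A4lin[OF xS] by simp
    then have ex: "\<exists>m\<in>A3 k. m \<le> x" using kA by blast
    have "x - m \<notin> A4 k" if m: "m \<in> A3 k" "m \<le> x" for m
    proof
      assume t: "x - m \<in> A4 k"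
      have xl: "x \<le> 10*k-3" using A4lin[OF xS] by simp
      have mc: "k \<le> m \<and> (m \<le> 2*k-1 \<or> (4*k-1 \<le> m \<and> m \<le> 5*k-2) \<or> m = 7*k-2 \<or> m = 9*k-2)"
        using m(1)
      proof (rule A3E)
        assume a: "7*k-2 \<le> m" "m mod (2*k) = k-2"
        have "m \<le> 3*(2*k) + m mod (2*k) \<or> 3*(2*k) + 2*k + m mod (2*k) \<le> m" using qsplit[OF D] by blast
        moreover have "m \<le> 4*(2*k) + m mod (2*k) \<or> 4*(2*k) + 2*k + m mod (2*k) \<le> m" using qsplit[OF D] by blast
        ultimately show ?thesis using a xl m(2) k2 by linarith
      qed (use k2 in linarith)+
      show False
        using xS
      proof (rule A4E)
        assume "k \<le> x" "x \<le> 2*k-1"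
        then show False using mc m(2) A4lin[OF t] k2 by linarith
      next
        assume x1: "4*k-1 \<le> x" "x \<le> 5*k-2"
        show False using mc
        proof (elim conjE disjE)
          assume "m \<le> 2*k-1" "k \<le> m" then show False using x1 t m(2) k2 by (elim A4E) linarith+
        qed (use x1 t m(2) k2 A4lin[OF t] in linarith)+
      next
        assume x1: "7*k-2 \<le> x" "x \<le> 8*k-3"
        show False using mc
        proof (elim conjE disjE)
        qed (use x1 t m(2) k2 in \<open>elim A4E; linarith\<close>)+
      next
        assume x1: "x = 10*k-3"
        show False using mc
        proof (elim conjE disjE)
        qed (use x1 t m(2) k2 in \<open>elim A4E; linarith\<close>)+
      qed
    qed
    then show "(\<exists>m\<in>A3 k. m \<le> x) \<and> (\<forall>m\<in>A3 k. m \<le> x \<longrightarrow> x-m \<notin> A4 k)" using ex by blast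
  next
    assume R: "(\<exists>m\<in>A3 k. m \<le> x) \<and> (\<forall>m\<in>A3 k. m \<le> x \<longrightarrow> x-m \<notin> A4 k)"
    show "x \<in> A4 k"
    proof (rule ccontr)
      assume xS: "x \<notin> A4 k"
      from R obtain m0 where m0: "m0 \<in> A3 k" "m0 \<le> x" by blast
      then have xk: "k \<le> x" using A3lin[of m0 k] by linarith
      define r where "r = x mod (2*k)"
      have rD: "r < 2*k" using rl r_def by simp
      have "\<exists>m\<in>A3 k. m \<le> x \<and> x - m \<in> A4 k"
      proof (cases "x \<le> 10*k-3")
        case True
        have n1: "\<not> (k \<le> x \<and> x \<le> 2*k-1)" "\<not> (4*k-1 \<le> x \<and> x \<le> 5*k-2)" "\<not> (7*k-2 \<le> x \<and> x \<le> 8*k-3)" "x \<noteq> 10*k-3"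
          apply -
          subgoal using xS A4I1[of k x] by meson
          subgoal using xS A4I2[of k x] by meson
          subgoal using xS A4I3[of k x] by meson
          subgoal using xS A4I4[of x k] by meson
          done
        have a: "2*k \<le> x" using n1(1) xk k2 by linarith
        have d: "x \<le> 10*k-4" using n1(4) True by linarith
        show ?thesis
        proof (cases "x \<le> 4*k-2")
          case T4: True
          show ?thesis
          proof (cases "x \<le> 3*k-1")
            case True
            have "x - k \<in> A3 k \<and> x - k \<le> x \<and> x - (x - k) \<in> A4 k"
              using True a xk k2 by (intro conjI A3I1 A4I1) linarith+
            then show ?thesis by blast
          next
            case False
            have "2*k-1 \<in> A3 k \<and> 2*k-1 \<le> x \<and> x - (2*k-1) \<in> A4 k"
              using False T4 a k2 by (intro conjI A3I1 A4I1) linarith+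
            then show ?thesis by blast
          qed
        next
          case F4: False
          then have b: "5*k-1 \<le> x" using n1(2) by linarith
          show ?thesis
          proof (cases "x \<le> 7*k-3")
            case T7: True
            show ?thesis
            proof (cases "x \<le> 6*k-2")
              case True
              have "x - (4*k-1) \<in> A3 k \<and> x - (4*k-1) \<le> x \<and> x - (x - (4*k-1)) \<in> A4 k"
                using True b k2 by (intro conjI A3I1 A4I2) linarith+
              then show ?thesis by blast
            next
              case False
              have "2*k-1 \<in> A3 k \<and> 2*k-1 \<le> x \<and> x - (2*k-1) \<in> A4 k"
                using False T7 b k2 by (intro conjI A3I1 A4I2) linarith+
              then show ?thesis by blast
            qed
          next
            case F7: False
            then have c: "8*k-2 \<le> x" using n1(3) by linarith
            show ?thesis
            proof (cases "x \<le> 9*k-3")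
              case True
              have "x - (7*k-2) \<in> A3 k \<and> x - (7*k-2) \<le> x \<and> x - (x - (7*k-2)) \<in> A4 k"
                using True c k2 by (intro conjI A3I1 A4I3) linarith+
              then show ?thesis by blast
            next
              case False
              have "2*k-1 \<in> A3 k \<and> 2*k-1 \<le> x \<and> x - (2*k-1) \<in> A4 k"
                using False d c k2 by (intro conjI A3I1 A4I3) linarith+
              then show ?thesis by blast
            qed
          qed
        qed
      next
        case False
        define q where "q = x div (2*k)"
        have e: "x = 2*k*q + r" using r_def q_def by simp
        consider "r+3 \<le> k" | "2*k-2 \<le> r" | "k \<le> r+3 \<and> r+4 \<le> 2*k" | "r = 2*k-3" using rD k2 by linarith
        then show ?thesis
        proof cases
          case 1
          define t where "t = r+k+2"
          have tt: "t mod (2*k) = t" using 1 t_def by simp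
          have tx: "t \<le> x" using t_def 1 False by linarith
          have "(x - t) mod (2*k) = 2*k + x mod (2*k) - t mod (2*k)"
            using diff_mod2[OF D tx] tt t_def r_def by simp
          then have "(x - t) mod (2*k) = k-2" using tt t_def r_def by simp
          moreover have "7*k-2 \<le> x - t" using t_def 1 False by linarith
          ultimately have "x - t \<in> A3 k" by (rule A3I3[rotated])
          moreover have "x - (x - t) \<in> A4 k" using tx t_def 1 k2 by (intro A4I1) linarith+
          ultimately show ?thesis by (intro bexI[of _ "x-t"]) auto
        next
          case 2
          define t where "t = r+2-k"
          have "t < 2*k" using 2 t_def rD k2 by linarith
          then have tt: "t mod (2*k) = t" by simp
          have tx: "t \<le> x" using t_def 2 False rD by linarith
          have "(x - t) mod (2*k) = x mod (2*k) - t mod (2*k)"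
            using diff_mod1[OF D tx] tt t_def r_def 2 k2 by simp
          then have "(x - t) mod (2*k) = k-2" using tt t_def r_def 2 k2 by simp
          moreover have "7*k-2 \<le> x - t" using t_def 2 False rD by linarith
          ultimately have "x - t \<in> A3 k" by (rule A3I3[rotated])
          moreover have "x - (x - t) \<in> A4 k" using tx t_def 2 k2 rD by (intro A4I1) linarith+
          ultimately show ?thesis by (intro bexI[of _ "x-t"]) auto
        next
          case 3
          have "\<not> q \<le> 1"
          proof
            assume "q \<le> 1"
            then have "k*q \<le> 1*k" by (rule mle)
            then show False using e rD False by linarith
          qed
          define q' where "q' = q - 2"
          have q': "q = q' + 2" using \<open>\<not> q \<le> 1\<close> q'_def by simp
          define t where "t = r+3*k+2"
          have e2: "x - t = 2*k*q' + (k-2)" using e q' t_def k2 by (simp add: algebra_simps)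
          have tm: "(x - t) mod (2*k) = k-2" using e2 k2 by (intro modI[of _ _ q']) simp_all
          have "x - t \<le> 2*(2*k) + (x-t) mod (2*k) \<or> 2*(2*k) + 2*k + (x-t) mod (2*k) \<le> x - t"
            using qsplit[OF D] by blast
          then have "7*k-2 \<le> x - t" using tm t_def 3 False k2 rD by linarith
          then have "x - t \<in> A3 k" using tm by (intro A3I3)
          moreover have "x - (x - t) \<in> A4 k" using t_def 3 k2 rD False by (intro A4I2) linarith+
          ultimately show ?thesis using t_def 3 False by (intro bexI[of _ "x-t"]) auto
        next
          case 4
          have "\<not> q \<le> 4"
          proof
            assume "q \<le> 4"
            then have "k*q \<le> 4*k" by (rule mle)
            then show False using e 4 False k2 by linarith
          qed
          show ?thesis
          proof (cases "q = 5")
            case True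
            then have x12: "x = 12*k-3" using e 4 k2 by simp
            have "5*k-2 \<in> A3 k \<and> 5*k-2 \<le> x \<and> x - (5*k-2) \<in> A4 k"
              using x12 k2 by (intro conjI A3I2 A4I3) linarith+
            then show ?thesis by blast
          next
            case False2: False
            define q' where "q' = q - 3"
            have q': "q = q' + 3" using \<open>\<not> q \<le> 4\<close> q'_def by simp
            have q3: "3 \<le> q'" using q' \<open>\<not> q \<le> 4\<close> False2 by linarith
            define t where "t = 7*k-1"
            have e2: "x - t = 2*k*q' + (k-2)" using e q' t_def 4 k2 by (simp add: algebra_simps)
            have tm: "(x - t) mod (2*k) = k-2" using e2 k2 by (intro modI[of _ _ q']) simp_all
            have "3*k \<le> k*q'" using q3 by (rule mge)
            then have "7*k-2 \<le> x - t" using e2 k2 by linarith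
            then have "x - t \<in> A3 k" using tm by (intro A3I3)
            moreover have "x - (x - t) \<in> A4 k" using t_def 4 k2 e \<open>7*k-2 \<le> x - t\<close> by (intro A4I3) linarith+
            ultimately show ?thesis using t_def 4 k2 \<open>7*k-2 \<le> x - t\<close> by (intro bexI[of _ "x-t"]) auto
          qed
        qed
      qed
      then show False using R by blast
    qed
  qed
qed



definition A5 :: "nat \<Rightarrow> nat set" where "A5 k = {x. k \<le> x mod (3*k-1) \<and> x mod (3*k-1) \<le> 2*k-1}"

lemma modI': "x = q*D + s \<Longrightarrow> s < (D::nat) \<Longrightarrow> x mod D = s" by simp

lemma A4_mod:
  assumes k2: "2 \<le> (k::nat)" and m: "m \<in> A4 k"
  shows "k \<le> m mod (3*k-1) \<and> m mod (3*k-1) \<le> 2*k-1"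
  using m
proof (rule A4E)
  assume a: "k \<le> m" "m \<le> 2*k-1"
  then have "m mod (3*k-1) = m" using k2 by simp
  then show ?thesis using a by simp
next
  assume a: "4*k-1 \<le> m" "m \<le> 5*k-2"
  have "m mod (3*k-1) = m - (3*k-1)" using a k2 by (intro modI'[of _ 1]) linarith+
  then show ?thesis using a k2 by linarith
next
  assume a: "7*k-2 \<le> m" "m \<le> 8*k-3"
  have "m mod (3*k-1) = m - 2*(3*k-1)" using a k2 by (intro modI'[of _ 2]) linarith+
  then show ?thesis using a k2 by linarith
next
  assume a: "m = 10*k-3"
  have "m mod (3*k-1) = k" using a k2 by (intro modI'[of _ 3]) linarith+
  then show ?thesis using a k2 by linarith
qed

lemma P5:
  assumes k2: "2 \<le> (k::nat)"
  shows "Pset (A4 k) = A5 k"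
proof (rule Pset_eqI)
  show "0 \<notin> A4 k" using k2 by (simp add: A4_def)
  fix x :: nat
  define p where "p = 3*k-1"
  have D: "0 < p" using k2 p_def by simp
  have rl: "\<And>y. y mod p < p" using D by simp
  have yl: "\<And>y. y mod p \<le> y" by simp
  have A4m: "\<And>m. m \<in> A4 k \<Longrightarrow> k \<le> m mod p \<and> m mod p \<le> 2*k-1" using A4_mod[OF k2] p_def by simp
  have A5p: "\<And>y. y \<in> A5 k \<longleftrightarrow> k \<le> y mod p \<and> y mod p \<le> 2*k-1" using p_def A5_def by simp
  show "x \<in> A5 k \<longleftrightarrow> ((\<exists>m\<in>A4 k. m \<le> x) \<and> (\<forall>m\<in>A4 k. m \<le> x \<longrightarrow> x-m \<notin> A5 k))"
  proof
    assume xS: "x \<in> A5 k"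
    have kA: "k \<in> A4 k" using k2 by (intro A4I1) linarith+
    have "k \<le> x" using xS A5p yl[of x] by (meson order_trans)
    then have ex: "\<exists>m\<in>A4 k. m \<le> x" using kA by blast
    have "x - m \<notin> A5 k" if m: "m \<in> A4 k" "m \<le> x" for m
    proof
      assume t: "x - m \<in> A5 k"
      have ms: "k \<le> m mod p" "m mod p \<le> 2*k-1" using A4m[OF m(1)] by auto
      have xs: "k \<le> x mod p" "x mod p \<le> 2*k-1" using xS A5p by auto
      have ts: "k \<le> (x-m) mod p" "(x-m) mod p \<le> 2*k-1" using t A5p by auto
      show False
      proof (cases "m mod p \<le> x mod p")
        case True
        then show False using diff_mod1[OF D m(2) True] ms xs ts k2 by linarith
      next
        case False
        then have "x mod p < m mod p" by simp
        then show False using diff_mod2[OF D m(2)] ms xs ts p_def by linarith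
      qed
    qed
    then show "(\<exists>m\<in>A4 k. m \<le> x) \<and> (\<forall>m\<in>A4 k. m \<le> x \<longrightarrow> x-m \<notin> A5 k)" using ex by blast
  next
    assume R: "(\<exists>m\<in>A4 k. m \<le> x) \<and> (\<forall>m\<in>A4 k. m \<le> x \<longrightarrow> x-m \<notin> A5 k)"
    show "x \<in> A5 k"
    proof (rule ccontr)
      assume xS: "x \<notin> A5 k"
      from R obtain m0 where m0: "m0 \<in> A4 k" "m0 \<le> x" by blast
      then have xk: "k \<le> x" using m0 by (elim A4E) linarith+
      define r where "r = x mod p"
      have rD: "r < p" using rl r_def by simp
      have "\<not> (k \<le> r \<and> r \<le> 2*k-1)" using xS A5p[of x] r_def by simp
      then have rn: "r < k \<or> 2*k-1 < r" by linarith
      have "\<exists>m\<in>A4 k. m \<le> x \<and> x - m \<in> A5 k"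
      proof (cases "r < k")
        case True
        then have "x mod p \<noteq> x" using xk r_def by simp
        then have xg: "p + r \<le> x" using mod_ge[OF D, of x] r_def by simp
        define m where "m = k + r"
        have mm: "m mod p = m" using True m_def p_def by simp
        have mx: "m \<le> x" using xg m_def p_def by linarith
        have "x mod p < m mod p" using mm m_def r_def k2 by simp
        then have "(x - m) mod p = p + x mod p - m mod p"
          using diff_mod2[OF D mx] by simp
        then have "(x - m) mod p = 2*k-1" using mm m_def r_def p_def k2 by linarith
        then have "x - m \<in> A5 k" using A5p k2 by simp
        moreover have "m \<in> A4 k" using m_def True by (intro A4I1) linarith+
        ultimately show ?thesis using mx by blast
      next
        case False
        then have r2: "2*k \<le> r" using rn by linarith
        define m where "m = r - k"
        have "m < p" using m_def rD by linarith
        then have mm: "m mod p = m" by simp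
        have mx: "m \<le> x" using m_def r_def yl[of x] by linarith
        have "m mod p \<le> x mod p" using mm m_def r_def by simp
        then have "(x - m) mod p = x mod p - m mod p"
          using diff_mod1[OF D mx] by simp
        then have "(x - m) mod p = k" using mm m_def r_def r2 by linarith
        then have "x - m \<in> A5 k" using A5p k2 by simp
        moreover have "m \<in> A4 k" using m_def r2 rD p_def by (intro A4I1) linarith+
        ultimately show ?thesis using mx by blast
      qed
      then show False using R by blast
    qed
  qed
qed


lemma E1:
  assumes k2: "2 \<le> (k::nat)"
  shows "{x. k \<le> x mod (2*k)} = {x. x mod (2 * k) \<in> {k..2 * k - 1}}"
proof (rule set_eqI)
  fix x :: nat
  have "x mod (2*k) < 2*k" using k2 by simp
  then have "x mod (2*k) \<le> 2*k-1" by linarith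
  then show "x \<in> {x. k \<le> x mod (2*k)} \<longleftrightarrow> x \<in> {x. x mod (2 * k) \<in> {k..2 * k - 1}}" by simp
qed

lemma E2:
  assumes k2: "2 \<le> (k::nat)"
  shows "A2 k = {k..2 * k - 1} \<union> {2 * j * k - 1 | j. j \<ge> 2}"
proof (rule set_eqI)
  fix x :: nat
  show "x \<in> A2 k \<longleftrightarrow> x \<in> {k..2 * k - 1} \<union> {2 * j * k - 1 | j. j \<ge> 2}"
  proof
    assume "x \<in> A2 k"
    then consider "k \<le> x \<and> x \<le> 2*k-1" | "4*k-1 \<le> x \<and> x mod (2*k) = 2*k-1" unfolding A2_def by auto
    then show "x \<in> {k..2 * k - 1} \<union> {2 * j * k - 1 | j. j \<ge> 2}"
    proof cases
      case 1 then show ?thesis by simp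
    next
      case 2
      define q where "q = x div (2*k)"
      have e: "x = 2*k*q + (2*k-1)" using 2 q_def by (metis div_mult_mod_eq mult.commute)
      have "\<not> q \<le> 0"
      proof
        assume "q \<le> 0" then have "q = 0" by simp
        then show False using e 2 k2 by simp
      qed
      then have q1: "1 \<le> q" by simp
      have "x = 2*(q+1)*k - 1" using e k2 by (simp add: algebra_simps)
      moreover have "q + 1 \<ge> 2" using q1 by simp
      ultimately show ?thesis by blast
    qed
  next
    assume "x \<in> {k..2 * k - 1} \<union> {2 * j * k - 1 | j. j \<ge> 2}"
    then consider "k \<le> x \<and> x \<le> 2*k-1" | j where "x = 2*j*k-1" "j \<ge> 2" by auto
    then show "x \<in> A2 k"
    proof cases
      case 1 then show ?thesis by (intro A2I1) auto
    next
      case 2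
      define j' where "j' = j - 1"
      have jj: "j = j' + 1" using 2 j'_def by simp
      have e: "x = 2*k*j' + (2*k-1)" using 2(1) jj k2 by (simp add: algebra_simps)
      have "x mod (2*k) = 2*k-1" using e k2 by (intro modI[of _ _ j']) simp_all
      moreover have "1*k \<le> k*j'" using 2 jj by (intro mge) simp
      then have "4*k-1 \<le> x" using e k2 by linarith
      ultimately show ?thesis unfolding A2_def by simp
    qed
  qed
qed

lemma E3:
  assumes k2: "2 \<le> (k::nat)"
  shows "A3 k = {k..2 * k - 1} \<union> {4 * k - 1..5 * k - 2} \<union> {(2 * j + 1) * k - 2 | j. j \<ge> 3}"
proof (rule set_eqI)
  fix x :: nat
  show "x \<in> A3 k \<longleftrightarrow> x \<in> {k..2 * k - 1} \<union> {4 * k - 1..5 * k - 2} \<union> {(2 * j + 1) * k - 2 | j. j \<ge> 3}"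
  proof
    assume "x \<in> A3 k"
    then show "x \<in> {k..2 * k - 1} \<union> {4 * k - 1..5 * k - 2} \<union> {(2 * j + 1) * k - 2 | j. j \<ge> 3}"
    proof (rule A3E)
      assume 2: "7*k-2 \<le> x" "x mod (2*k) = k-2"
      define q where "q = x div (2*k)"
      have e: "x = 2*k*q + (k-2)" using 2 q_def by (metis div_mult_mod_eq mult.commute)
      have "\<not> q \<le> 2"
      proof
        assume "q \<le> 2" then have "k*q \<le> 2*k" by (rule mle)
        then show False using e 2 k2 by linarith
      qed
      then have q1: "3 \<le> q" by simp
      have "x = (2*q+1)*k - 2" using e k2 by (simp add: algebra_simps)
      then show ?thesis using q1 by blast
    qed auto
  next
    assume "x \<in> {k..2 * k - 1} \<union> {4 * k - 1..5 * k - 2} \<union> {(2 * j + 1) * k - 2 | j. j \<ge> 3}"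
    then consider "k \<le> x \<and> x \<le> 2*k-1" | "4*k-1 \<le> x \<and> x \<le> 5*k-2" | j where "x = (2*j+1)*k-2" "j \<ge> 3" by auto
    then show "x \<in> A3 k"
    proof cases
      case 1 then show ?thesis by (intro A3I1) auto
    next
      case 2 then show ?thesis by (intro A3I2) auto
    next
      case 3
      have e: "x = 2*k*j + (k-2)" using 3(1) k2 by (simp add: algebra_simps)
      have "x mod (2*k) = k-2" using e k2 by (intro modI[of _ _ j]) simp_all
      moreover have "3*k \<le> k*j" using 3 by (intro mge) simp
      ultimately show ?thesis using e k2 by (intro A3I3) linarith+
    qed
  qed
qed

lemma E4:
  assumes k2: "2 \<le> (k::nat)"
  shows "A4 k = Mk k \<inter> {0..10 * k - 3}"
proof (rule set_eqI)
  fix x :: nat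
  show "x \<in> A4 k \<longleftrightarrow> x \<in> Mk k \<inter> {0..10 * k - 3}"
  proof
    assume xA: "x \<in> A4 k"
    have "x \<le> 10*k-3" using xA k2 by (elim A4E) linarith+
    moreover have "x \<in> Mk k" using xA
    proof (rule A4E)
      assume a: "k \<le> x" "x \<le> 2*k-1"
      have "x = 0*(3*k-1) + x" by simp
      then show ?thesis using a unfolding Mk_def by blast
    next
      assume a: "4*k-1 \<le> x" "x \<le> 5*k-2"
      have "x = 1*(3*k-1) + (x - (3*k-1))" using a k2 by linarith
      moreover have "k \<le> x - (3*k-1) \<and> x - (3*k-1) \<le> 2*k-1" using a k2 by linarith
      ultimately show ?thesis unfolding Mk_def by blast
    next
      assume a: "7*k-2 \<le> x" "x \<le> 8*k-3"
      have "x = 2*(3*k-1) + (x - 2*(3*k-1))" using a k2 by linarith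
      moreover have "k \<le> x - 2*(3*k-1) \<and> x - 2*(3*k-1) \<le> 2*k-1" using a k2 by linarith
      ultimately show ?thesis unfolding Mk_def by blast
    next
      assume a: "x = 10*k-3"
      have "x = 3*(3*k-1) + k" using a k2 by linarith
      moreover have "k \<le> k \<and> k \<le> 2*k-1" using k2 by linarith
      ultimately show ?thesis unfolding Mk_def by blast
    qed
    ultimately show "x \<in> Mk k \<inter> {0..10 * k - 3}" by simp
  next
    assume "x \<in> Mk k \<inter> {0..10 * k - 3}"
    then obtain i j where x: "x = i*(3*k-1) + j" "k \<le> j" "j \<le> 2*k-1" "x \<le> 10*k-3" unfolding Mk_def by auto
    have "\<not> 4 \<le> i"
    proof
      assume "4 \<le> i"
      then have "4*(3*k-1) \<le> i*(3*k-1)" by (rule mult_le_mono1)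
      then show False using x k2 by linarith
    qed
    then have "i = 0 \<or> i = 1 \<or> i = 2 \<or> i = 3" by arith
    then show "x \<in> A4 k"
    proof (elim disjE)
      assume "i = 0" then show ?thesis using x by (intro A4I1) simp_all
    next
      assume "i = 1" then show ?thesis using x k2 by (intro A4I2) simp_all
    next
      assume "i = 2" then have "x = 2*(3*k-1) + j" using x by simp
      then show ?thesis using x k2 by (intro A4I3) linarith+
    next
      assume "i = 3" then have "x = 3*(3*k-1) + j" using x by simp
      then show ?thesis using x k2 by (intro A4I4) linarith
    qed
  qed
qed

lemma E5:
  assumes k2: "2 \<le> (k::nat)"
  shows "A5 k = Mk k"
proof (rule set_eqI)
  fix x :: nat
  show "x \<in> A5 k \<longleftrightarrow> x \<in> Mk k"
  proof
    assume "x \<in> A5 k"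
    then have a: "k \<le> x mod (3*k-1)" "x mod (3*k-1) \<le> 2*k-1" unfolding A5_def by auto
    have "x = (x div (3*k-1))*(3*k-1) + x mod (3*k-1)" by (rule div_mult_mod_eq[symmetric])
    then show "x \<in> Mk k" using a unfolding Mk_def by blast
  next
    assume "x \<in> Mk k"
    then obtain i j where x: "x = i*(3*k-1) + j" "k \<le> j" "j \<le> 2*k-1" unfolding Mk_def by auto
    have "x mod (3*k-1) = j" using x k2 by (intro modI'[of _ i]) linarith+
    then show "x \<in> A5 k" using x unfolding A5_def by simp
  qed
qed

lemma iterP_Suc: "iterP M (Suc n) = Pset (iterP M n)" by (simp add: iterP_def)

theorem lemma9:
  fixes k :: nat
  assumes "k \<ge> 2"
  shows "iterP {k} 1 = {x. x mod (2 * k) \<in> {k..2 * k - 1}} \<and>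
    iterP {k} 2 = {k..2 * k - 1} \<union> {2 * j * k - 1 | j. j \<ge> 2} \<and>
    iterP {k} 3 = {k..2 * k - 1} \<union> {4 * k - 1..5 * k - 2} \<union> {(2 * j + 1) * k - 2 | j. j \<ge> 3} \<and>
    iterP {k} 4 = Mk k \<inter> {0..10 * k - 3} \<and>
    iterP {k} 5 = Mk k"
proof -
  have i1: "iterP {k} 1 = {x. k \<le> x mod (2*k)}" using P1[OF assms] by (simp add: iterP_def)
  have n: "Suc 1 = (2::nat)" "Suc 2 = (3::nat)" "Suc 3 = (4::nat)" "Suc 4 = (5::nat)" by simp_all
  have s2: "iterP {k} 2 = Pset (iterP {k} 1)" using iterP_Suc[of "{k}" 1] by (simp only: n)
  have s3: "iterP {k} 3 = Pset (iterP {k} 2)" using iterP_Suc[of "{k}" 2] by (simp only: n)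
  have s4: "iterP {k} 4 = Pset (iterP {k} 3)" using iterP_Suc[of "{k}" 3] by (simp only: n)
  have s5: "iterP {k} 5 = Pset (iterP {k} 4)" using iterP_Suc[of "{k}" 4] by (simp only: n)
  have i2: "iterP {k} 2 = A2 k" using s2 i1 P2[OF assms] by (simp add: A2_def)
  have i3: "iterP {k} 3 = A3 k" using s3 i2 P3[OF assms] by simp
  have i4: "iterP {k} 4 = A4 k" using s4 i3 P4[OF assms] by simp
  have i5: "iterP {k} 5 = A5 k" using s5 i4 P5[OF assms] by simp
  show ?thesis using i1 i2 i3 i4 i5 E1[OF assms] E2[OF assms] E3[OF assms] E4[OF assms] E5[OF assms] by simp
qed


end
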